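(* Let $n\ge 3$, let $d_1,\dots,d_{n-1}>0$, and let the gains satisfy $$k_1\ge k_2,\qquad k_i\ge k_{i+1}+1\ (i=2,\ldots,n-2),\qquad k_{n-1}\ge 1.$$ Writing $s_i(z)=\mathrm{sgn}(z_i)\,\mathrm{sgn}(|z_i|-d_i)$, consider the system on $\mathbb{R}^{n-1}$ $$\dot z_1=-(k_1+1)s_1(z)+k_2 s_2(z),$$ $$\dot z_i=s_{i-1}(z)-(k_i+1)s_i(z)+k_{i+1}s_{i+1}(z),\quad i=2,\ldots,n-2,$$ $$\dot z_{n-1}=s_{n-2}(z)-(k_{n-1}+1)s_{n-1}(z),$$ with right-hand side denoted $f(z)$. Then every Krasowskii solution $z(t)$ of this system converges, as $t\to\infty$, to (a subset of) the set $$\mathcal{E}=\Big\{z\in\mathbb{R}^{n-1}:\sum_{i=1}^{n-1}|z_i|\,\big||z_i|-d_i\big|=0\Big\},$$ i.e. $\mathrm{dist}(z(t),\mathcal{E})\to 0$.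
   Context: The sign function is $\mathrm{sgn}(z)=+1$ if $z\ge 0$ and $\mathrm{sgn}(z)=-1$ if $z<0$. A Krasowskii solution of $\dot z=f(z)$ is an absolutely continuous function $z(t)$ with $\dot z(t)\in\mathcal{K}(f(z(t)))$ for almost every $t$, where $\mathcal{K}(f(z))=\bigcap_{\delta>0}\overline{\mathrm{co}}\,(f(B(z,\delta)))$, $\overline{\mathrm{co}}$ denoting the closed convex hull and $B(z,\delta)$ the open ball of radius $\delta$ about $z$. The system describes the relative positions $z_i=x_i-x_{i+1}$ of $n$ agents on a line moving under $\dot x_1=-k_1\mathrm{sgn}(x_1-x_2)\mathrm{sgn}(|x_1-x_2|-d_1)$, $\dot x_i=\mathrm{sgn}(x_{i-1}-x_i)\mathrm{sgn}(|x_{i-1}-x_i|-d_{i-1})-k_i\mathrm{sgn}(x_i-x_{i+1})\mathrm{sgn}(|x_i-x_{i+1}|-d_i)$ for $2\le i\le n-1$, $\dot x_n=\mathrm{sgn}(x_{n-1}-x_n)\mathrm{sgn}(|x_{n-1}-x_n|-d_{n-1})$. *)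

theory Defs
  imports "HOL-Analysis.Analysis"
begin

definition sgnp :: "real \<Rightarrow> real" where
  "sgnp x = (if x \<ge> 0 then 1 else -1)"

definition sfun :: "(nat \<Rightarrow> real) \<Rightarrow> (nat \<Rightarrow> real) \<Rightarrow> nat \<Rightarrow> real" where
  "sfun d zc i = sgnp (zc i) * sgnp (\<bar>zc i\<bar> - d i)"

definition fcomp :: "nat \<Rightarrow> (nat \<Rightarrow> real) \<Rightarrow> (nat \<Rightarrow> real) \<Rightarrow> (nat \<Rightarrow> real) \<Rightarrow> nat \<Rightarrow> real" where
  "fcomp n k d zc i =
     (if 2 \<le> i then sfun d zc (i - 1) else 0)
     - (k i + 1) * sfun d zc i
     + (if i \<le> n - 2 then k (i + 1) * sfun d zc (i + 1) else 0)"

text \<open>Coordinates of a state vector z in R^(n-1), where the index type 'm is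
  enumerated by e : {1..n-1} -> 'm (so z_i = z $ e i).\<close>
definition coords :: "(nat \<Rightarrow> 'm::finite) \<Rightarrow> real ^ 'm \<Rightarrow> nat \<Rightarrow> real" where
  "coords e z i = z $ e i"

definition vfield :: "nat \<Rightarrow> (nat \<Rightarrow> 'm::finite) \<Rightarrow> (nat \<Rightarrow> real) \<Rightarrow> (nat \<Rightarrow> real)
    \<Rightarrow> real ^ 'm \<Rightarrow> real ^ 'm" where
  "vfield n e k d z = (\<chi> j. fcomp n k d (coords e z) (inv_into {1..n-1} e j))"

definition krasowskii :: "('a::real_normed_vector \<Rightarrow> 'a) \<Rightarrow> 'a \<Rightarrow> 'a set" where
  "krasowskii f z = (\<Inter>\<delta>\<in>{0<..}. closure (convex hull (f ` ball z \<delta>)))"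

definition abs_cont_on :: "real \<Rightarrow> real \<Rightarrow> (real \<Rightarrow> 'a::real_normed_vector) \<Rightarrow> bool" where
  "abs_cont_on a b z \<longleftrightarrow>
     (\<forall>\<epsilon>>0. \<exists>\<delta>>0. \<forall>I :: (real \<times> real) set.
        finite I \<and> (\<forall>(u,v)\<in>I. a \<le> u \<and> u \<le> v \<and> v \<le> b)
        \<and> disjoint_family_on (\<lambda>(u,v). {u<..<v}) I
        \<and> (\<Sum>(u,v)\<in>I. v - u) < \<delta>
        \<longrightarrow> (\<Sum>(u,v)\<in>I. norm (z v - z u)) < \<epsilon>)"

definition krasowskii_solution :: "('a::euclidean_space \<Rightarrow> 'a) \<Rightarrow> (real \<Rightarrow> 'a) \<Rightarrow> bool" where
  "krasowskii_solution f z \<longleftrightarrow>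
     (\<forall>T\<ge>0. abs_cont_on 0 T z) \<and>
     (AE t in lebesgue. 0 < t \<longrightarrow>
        (\<exists>v. (z has_vector_derivative v) (at t) \<and> v \<in> krasowskii f (z t)))"

definition Eset :: "nat \<Rightarrow> (nat \<Rightarrow> 'm::finite) \<Rightarrow> (nat \<Rightarrow> real) \<Rightarrow> (real ^ 'm) set" where
  "Eset n e d = {z. (\<Sum>i=1..n-1. \<bar>coords e z i\<bar> * \<bar>\<bar>coords e z i\<bar> - d i\<bar>) = 0}"

end

theory Submission
  imports Defs
begin



lemma deriv_local:
  fixes W :: "real \<Rightarrow> real"
  assumes "(W has_real_derivative w) (at t)" "w \<le> \<mu>" "\<epsilon> > 0"
  shows "\<exists>r>0. \<forall>u v. u \<le> t \<longrightarrow> t \<le> v \<longrightarrow> t - r < u \<longrightarrow> v < t + r \<longrightarrow> W v - W u \<le> (\<mu>+\<epsilon>)*(v-u)"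
proof -
  have "((\<lambda>y. (W y - W t)/(y - t)) \<longlongrightarrow> w) (at t)"
    using assms(1) by (simp add: has_field_derivative_iff)
  then have "\<forall>\<^sub>F y in at t. dist ((W y - W t)/(y - t)) w < \<epsilon>"
    using tendstoD assms(3) by blast
  then obtain r where r: "r > 0" and rr: "\<And>y. y \<noteq> t \<Longrightarrow> dist y t < r \<Longrightarrow> dist ((W y - W t)/(y - t)) w < \<epsilon>"
    unfolding eventually_at by blast
  have key: "\<bar>W y - W t - w*(y-t)\<bar> \<le> \<epsilon>*\<bar>y-t\<bar>" if "\<bar>y - t\<bar> < r" for y
  proof (cases "y = t")
    case True then show ?thesis by simp
  next
    case False
    then have "\<bar>(W y - W t)/(y - t) - w\<bar> < \<epsilon>" using rr[of y] that by (simp add: dist_real_def)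
    moreover have "(W y - W t)/(y - t) - w = (W y - W t - w*(y-t))/(y-t)" using False by (simp add: field_simps)
    ultimately have "\<bar>W y - W t - w*(y-t)\<bar> / \<bar>y-t\<bar> < \<epsilon>" by (simp add: abs_divide)
    then show ?thesis using False by (simp add: field_simps)
  qed
  show ?thesis
  proof (intro exI[of _ r] conjI allI impI)
    fix u v assume h: "u \<le> t" "t \<le> v" "t - r < u" "v < t + r"
    have a: "W v - W t \<le> w*(v-t) + \<epsilon>*(v-t)" using key[of v] h by auto
    have b: "W t - W u \<le> w*(t-u) + \<epsilon>*(t-u)" using key[of u] h by (auto simp: abs_le_iff algebra_simps)
    have c: "w*(v-t) \<le> \<mu>*(v-t)" "w*(t-u) \<le> \<mu>*(t-u)" using h assms(2) by (auto intro: mult_right_mono)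
    show "W v - W u \<le> (\<mu>+\<epsilon>)*(v-u)" using a b c by (simp add: algebra_simps)
  qed (use r in auto)
qed


lemma measure_lebesgue_Icc_aux: "c \<le> d \<Longrightarrow> k = {c..d} \<Longrightarrow> measure lebesgue k = d - (c::real)"
  by simp

lemma eps_bound:
  fixes x y C :: real
  assumes "\<And>e. 0 < e \<Longrightarrow> e \<le> 1 \<Longrightarrow> x \<le> y + e*C" "C \<ge> 0"
  shows "x \<le> y"
proof (rule field_le_epsilon)
  fix e :: real assume e: "e > 0"
  define e' where "e' = min 1 (e/(C+1))"
  have e'1: "0 < e'" "e' \<le> 1" using e assms(2) by (auto simp: e'_def)
  have "e'*C \<le> (e/(C+1))*C" using assms(2) by (intro mult_right_mono) (auto simp: e'_def)
  also have "\<dots> \<le> e" using e assms(2) by (simp add: field_simps)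
  finally show "x \<le> y + e" using assms(1)[OF e'1] by linarith
qed

lemma gauge_mono:
  fixes W :: "real \<Rightarrow> real"
  assumes ab: "a \<le> b" and negN: "negligible N" and ac: "abs_cont_on a b W"
    and der: "\<And>t. t \<in> {a..b} \<Longrightarrow> t \<notin> N \<Longrightarrow> \<exists>w. (W has_real_derivative w) (at t) \<and> w \<le> \<mu>"
  shows "W b - W a \<le> \<mu>*(b-a)"
proof (rule eps_bound)
  show "0 \<le> b - a + \<bar>\<mu>\<bar> + 2" using ab by simp
  fix \<epsilon> :: real assume \<epsilon>: "0 < \<epsilon>" "\<epsilon> \<le> 1"
  obtain \<delta>0 where \<delta>0: "\<delta>0 > 0" and ac\<delta>: "\<And>I :: (real \<times> real) set.
        finite I \<Longrightarrow> (\<forall>(u,v)\<in>I. a \<le> u \<and> u \<le> v \<and> v \<le> b)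
        \<Longrightarrow> disjoint_family_on (\<lambda>(u,v). {u<..<v}) I
        \<Longrightarrow> (\<Sum>(u,v)\<in>I. v - u) < \<delta>0
        \<Longrightarrow> (\<Sum>(u,v)\<in>I. \<bar>W v - W u\<bar>) < \<epsilon>"
    using ac \<epsilon>(1) unfolding abs_cont_on_def real_norm_def by meson
  define \<delta> where "\<delta> = min \<delta>0 \<epsilon>"
  have \<delta>: "\<delta> > 0" "\<delta> \<le> \<delta>0" "\<delta> \<le> \<epsilon>" using \<delta>0 \<epsilon> by (auto simp: \<delta>_def)
  obtain G where G: "open G" "N \<subseteq> G" "(G - N) \<in> lmeasurable" "emeasure lebesgue (G - N) < ennreal \<delta>"
    using sets_lebesgue_outer_open[OF negligible_imp_sets[OF negN] \<delta>(1)] by blast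
  have Nm: "N \<in> lmeasurable" using negN by (rule negligible_imp_measurable)
  have GNU: "G = N \<union> (G - N)" using G(2) by blast
  have Gm: "G \<in> lmeasurable" using Nm G(3) GNU by (metis fmeasurable.Un)
  have "measure lebesgue (G - N) < \<delta>"
    using G(4) emeasure_eq_measure2[OF G(3)] \<delta>(1) by (simp add: ennreal_less_iff)
  moreover have "measure lebesgue G \<le> measure lebesgue N + measure lebesgue (G - N)"
    using GNU measure_Un_le[of N lebesgue "G - N"] Nm G(3) by (metis fmeasurable_def mem_Collect_eq)
  ultimately have mG: "measure lebesgue G < \<delta>" using negligible_imp_measure0[OF negN] by linarith
  have "\<forall>t. \<exists>r>0. (t \<in> N \<longrightarrow> ball t r \<subseteq> G) \<and> (t \<in> {a..b} \<and> t \<notin> N \<longrightarrow>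
          (\<forall>u v. u \<le> t \<longrightarrow> t \<le> v \<longrightarrow> t - r < u \<longrightarrow> v < t + r \<longrightarrow> W v - W u \<le> (\<mu>+\<epsilon>)*(v-u)))"
  proof
    fix t
    show "\<exists>r>0. (t \<in> N \<longrightarrow> ball t r \<subseteq> G) \<and> (t \<in> {a..b} \<and> t \<notin> N \<longrightarrow>
          (\<forall>u v. u \<le> t \<longrightarrow> t \<le> v \<longrightarrow> t - r < u \<longrightarrow> v < t + r \<longrightarrow> W v - W u \<le> (\<mu>+\<epsilon>)*(v-u)))"
    proof (cases "t \<in> N")
      case True
      then obtain r where "r > 0" "ball t r \<subseteq> G" using G(1,2) openE by blast
      then show ?thesis using True by blast
    next
      case False
      show ?thesis
      proof (cases "t \<in> {a..b}")
        case True
        then obtain w where "(W has_real_derivative w) (at t)" "w \<le> \<mu>" using der False by blast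
        from deriv_local[OF this \<epsilon>(1)] show ?thesis using False by blast
      next
        case False2: False
        show ?thesis using False False2 by (intro exI[of _ 1]) auto
      qed
    qed
  qed
  then obtain r where r: "\<And>t. r t > 0" and rN: "\<And>t. t \<in> N \<Longrightarrow> ball t (r t) \<subseteq> G"
     and rO: "\<And>t u v. t \<in> {a..b} \<Longrightarrow> t \<notin> N \<Longrightarrow> u \<le> t \<Longrightarrow> t \<le> v \<Longrightarrow> t - r t < u \<Longrightarrow> v < t + r t \<Longrightarrow> W v - W u \<le> (\<mu>+\<epsilon>)*(v-u)"
  proof -
    assume th: "\<And>r. (\<And>t. r t > 0) \<Longrightarrow> (\<And>t. t \<in> N \<Longrightarrow> ball t (r t) \<subseteq> G) \<Longrightarrow>
     (\<And>t u v. t \<in> {a..b} \<Longrightarrow> t \<notin> N \<Longrightarrow> u \<le> t \<Longrightarrow> t \<le> v \<Longrightarrow> t - r t < u \<Longrightarrow> v < t + r t \<Longrightarrow> W v - W u \<le> (\<mu>+\<epsilon>)*(v-u)) \<Longrightarrow> thesis"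
    from choice[OF \<open>\<forall>t. _\<close>] obtain r where R: "\<forall>t. r t > 0 \<and> (t \<in> N \<longrightarrow> ball t (r t) \<subseteq> G) \<and> (t \<in> {a..b} \<and> t \<notin> N \<longrightarrow>
          (\<forall>u v. u \<le> t \<longrightarrow> t \<le> v \<longrightarrow> t - r t < u \<longrightarrow> v < t + r t \<longrightarrow> W v - W u \<le> (\<mu>+\<epsilon>)*(v-u)))"
      by blast
    show thesis
    proof (rule th)
      show "\<And>t. r t > 0" using R by blast
      show "\<And>t. t \<in> N \<Longrightarrow> ball t (r t) \<subseteq> G" using R by blast
      show "\<And>t u v. t \<in> {a..b} \<Longrightarrow> t \<notin> N \<Longrightarrow> u \<le> t \<Longrightarrow> t \<le> v \<Longrightarrow> t - r t < u \<Longrightarrow> v < t + r t \<Longrightarrow> W v - W u \<le> (\<mu>+\<epsilon>)*(v-u)"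
        using R by blast
    qed
  qed
  have gauge: "gauge (\<lambda>t. ball t (r t))" using r by (intro gauge_ball_dependent) auto
  obtain p where p: "p tagged_division_of {a..b}" and fine: "(\<lambda>t. ball t (r t)) fine p"
    using fine_division_exists_real[OF gauge] by blast
  have finp: "finite p" using tagged_division_ofD(1)[OF p] .
  have InfSup: "k = {Inf k..Sup k} \<and> Inf k \<le> x \<and> x \<le> Sup k \<and> a \<le> Inf k \<and> Sup k \<le> b \<and> k \<subseteq> ball x (r x)"
    if xkp: "(x,k) \<in> p" for x k
  proof -
    obtain c d where k: "k = {c..d}" using tagged_division_ofD(4)[OF p xkp] by (metis box_real(2))
    have xk: "x \<in> k" using tagged_division_ofD(2)[OF p xkp] .
    have ksub: "k \<subseteq> {a..b}" using tagged_division_ofD(3)[OF p xkp] .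
    have kb: "k \<subseteq> ball x (r x)" using fine xkp unfolding fine_def by blast
    have cd: "c \<le> x" "x \<le> d" using xk k by auto
    then have "c \<le> d" by linarith
    then have IS: "Inf k = c" "Sup k = d" using k by simp_all
    have "a \<le> c" "d \<le> b" using ksub k \<open>c \<le> d\<close> by auto
    then show ?thesis using IS k cd kb by simp
  qed
  define pN where "pN = {(x,k)\<in>p. x \<in> N}"
  define pO where "pO = {(x,k)\<in>p. x \<notin> N}"
  have pU: "p = pN \<union> pO" "pN \<inter> pO = {}" by (auto simp: pN_def pO_def)
  have subp: "pN \<subseteq> p" "pO \<subseteq> p" by (auto simp: pN_def pO_def)
  have finN: "finite pN" "finite pO" using finp subp by (auto intro: finite_subset)
  let ?dW = "\<lambda>(x,k). W (Sup k) - W (Inf k)"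
  let ?len = "\<lambda>(x::real,k::real set). Sup k - Inf k"
  have sumW: "(\<Sum>(x,k)\<in>p. W (Sup k) - W (Inf k)) = W b - W a"
    by (rule additive_tagged_division_1[OF ab p])
  have sumL: "(\<Sum>(x,k)\<in>p. Sup k - Inf k) = b - a"
    using additive_tagged_division_1[OF ab p, of "\<lambda>x. x"] by simp
  have sumW2: "W b - W a = sum ?dW pN + sum ?dW pO"
    using sumW pU finN by (metis sum.union_disjoint)
  have sumL2: "b - a = sum ?len pN + sum ?len pO"
    using sumL pU finN by (metis sum.union_disjoint)
  have O: "sum ?dW pO \<le> sum (\<lambda>(x,k). (\<mu>+\<epsilon>)*(Sup k - Inf k)) pO"
  proof (rule sum_mono)
    fix xk assume "xk \<in> pO"
    then obtain x k where xk: "xk = (x,k)" "(x,k) \<in> p" "x \<notin> N" by (auto simp: pO_def)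
    have I: "k = {Inf k..Sup k}" "Inf k \<le> x" "x \<le> Sup k" "a \<le> Inf k" "Sup k \<le> b" "k \<subseteq> ball x (r x)"
      using InfSup[OF xk(2)] by auto
    have "Inf k \<in> {Inf k..Sup k}" "Sup k \<in> {Inf k..Sup k}" using I by auto
    then have "Inf k \<in> k" "Sup k \<in> k" using I(1) by simp_all
    then have "Inf k \<in> ball x (r x)" "Sup k \<in> ball x (r x)" using I(6) by blast+
    then have "x - r x < Inf k" "Sup k < x + r x" by (auto simp: dist_real_def)
    then show "?dW xk \<le> (\<lambda>(x,k). (\<mu>+\<epsilon>)*(Sup k - Inf k)) xk"
      using rO[of x "Inf k" "Sup k"] I xk by auto
  qed
  have O2: "sum (\<lambda>(x,k). (\<mu>+\<epsilon>)*(Sup k - Inf k)) pO = (\<mu>+\<epsilon>) * sum ?len pO"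
    by (simp add: sum_distrib_left case_prod_unfold)
  define h where "h = (\<lambda>(x::real,k::real set). (Inf k, Sup k))"
  have degen: "Sup k = Inf k" if "xk \<in> pN" "xk' \<in> pN" "xk \<noteq> xk'" "h xk = h xk'" "xk = (x,k)" for xk xk' x k
  proof -
    obtain x' k' where xk': "xk' = (x',k')" by fastforce
    have inp: "(x,k) \<in> p" "(x',k') \<in> p" using that xk' pU by auto
    have "k = {Inf k..Sup k}" "k' = {Inf k'..Sup k'}" using InfSup inp by blast+
    then have "k = k'" using that(4,5) xk' by (simp add: h_def)
    then have "interior k = {}" using that(3,5) xk' tagged_division_ofD(5)[OF p inp] by auto
    then have "{Inf k<..<Sup k} = {}" using \<open>k = {Inf k..Sup k}\<close> by (metis interior_atLeastAtMost_real)
    moreover have "Inf k \<le> Sup k" using InfSup[OF inp(1)] by auto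
    ultimately show ?thesis by (metis greaterThanLessThan_iff dense empty_iff order_antisym_conv not_le)
  qed
  define I where "I = h ` pN"
  have finI: "finite I" using finN by (simp add: I_def)
  have hdeg: "Sup k = Inf k" if "xk \<in> pN" "xk' \<in> pN" "xk \<noteq> xk'" "h xk = h xk'" "xk = (x,k)" for xk xk' x k
    using degen[OF that] .
  have IW: "(\<Sum>(u,v)\<in>I. \<bar>W v - W u\<bar>) = (\<Sum>(x,k)\<in>pN. \<bar>W (Sup k) - W (Inf k)\<bar>)"
  proof -
    have "(\<Sum>(u,v)\<in>I. \<bar>W v - W u\<bar>) = sum ((\<lambda>(u,v). \<bar>W v - W u\<bar>) \<circ> h) pN"
      unfolding I_def
    proof (rule sum.reindex_nontrivial[OF finN(1)])
      fix xk xk' assume H: "xk \<in> pN" "xk' \<in> pN" "xk \<noteq> xk'" "h xk = h xk'"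
      obtain x k where xk: "xk = (x,k)" by fastforce
      have "Sup k = Inf k" using hdeg[OF H xk] .
      then show "(\<lambda>(u,v). \<bar>W v - W u\<bar>) (h xk) = 0" by (simp add: xk h_def)
    qed
    also have "\<dots> = (\<Sum>(x,k)\<in>pN. \<bar>W (Sup k) - W (Inf k)\<bar>)"
      by (rule sum.cong) (auto simp: h_def)
    finally show ?thesis .
  qed
  have IL: "(\<Sum>(u,v)\<in>I. v - u) = sum ?len pN"
  proof -
    have "(\<Sum>(u,v)\<in>I. v - u) = sum ((\<lambda>(u,v). v - u) \<circ> h) pN"
      unfolding I_def
    proof (rule sum.reindex_nontrivial[OF finN(1)])
      fix xk xk' assume H: "xk \<in> pN" "xk' \<in> pN" "xk \<noteq> xk'" "h xk = h xk'"
      obtain x k where xk: "xk = (x,k)" by fastforce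
      have "Sup k = Inf k" using hdeg[OF H xk] .
      then show "(\<lambda>(u,v). v - u) (h xk) = 0" by (simp add: xk h_def)
    qed
    also have "\<dots> = sum ?len pN"
      by (rule sum.cong) (auto simp: h_def)
    finally show ?thesis .
  qed
  have Ibounds: "\<forall>(u,v)\<in>I. a \<le> u \<and> u \<le> v \<and> v \<le> b"
    using InfSup pU by (force simp: I_def h_def)
  have Idisj: "disjoint_family_on (\<lambda>(u,v). {u<..<v}) I"
    unfolding disjoint_family_on_def
  proof (intro ballI impI)
    fix uv uv' assume h: "uv \<in> I" "uv' \<in> I" "uv \<noteq> uv'"
    then obtain x k x' k' where xk: "(x,k) \<in> pN" "(x',k') \<in> pN" "uv = (Inf k, Sup k)" "uv' = (Inf k', Sup k')"
      by (force simp: I_def h_def)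
    then have "(x,k) \<noteq> (x',k')" using h by auto
    moreover have inp: "(x,k) \<in> p" "(x',k') \<in> p" using xk pU by auto
    ultimately have "interior k \<inter> interior k' = {}" using tagged_division_ofD(5)[OF p] by blast
    moreover have "k = {Inf k..Sup k}" "k' = {Inf k'..Sup k'}" using InfSup inp by blast+
    ultimately have "interior {Inf k..Sup k} \<inter> interior {Inf k'..Sup k'} = {}" by metis
    then show "(\<lambda>(u,v). {u<..<v}) uv \<inter> (\<lambda>(u,v). {u<..<v}) uv' = {}"
      using xk(3,4) by simp
  qed
  have sndm: "snd xk \<in> lmeasurable" if "xk \<in> pN" for xk
  proof -
    obtain x k where "xk = (x,k)" by fastforce
    with that have "xk = (x,k)" "(x,k) \<in> p" using subp by auto
    then show "snd xk \<in> lmeasurable" using InfSup by (metis lmeasurable_cbox box_real(2) snd_conv)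
  qed
  have Um: "\<Union>(snd ` pN) \<in> sets lebesgue"
    using sndm finN(1) by (intro sets.finite_Union) auto
  have measN: "measure lebesgue (\<Union>(snd ` pN)) = (\<Sum>xk\<in>pN. measure lebesgue (snd xk))"
  proof (rule measure_negligible_finite_Union_image[OF finN(1)])
    fix xk assume "xk \<in> pN"
    then show "snd xk \<in> lmeasurable" by (rule sndm)
  next
    show "pairwise (\<lambda>x y. negligible (snd x \<inter> snd y)) pN"
      unfolding pairwise_def
    proof (intro ballI impI)
      fix xk xk' assume h: "xk \<in> pN" "xk' \<in> pN" "xk \<noteq> xk'"
      obtain x k x' k' where xk0: "xk = (x,k)" "xk' = (x',k')" by fastforce
      then have xk: "xk = (x,k)" "xk' = (x',k')" "(x,k) \<in> p" "(x',k') \<in> p" using h subp by auto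
      then have "interior k \<inter> interior k' = {}" using tagged_division_ofD(5)[OF p] h by blast
      moreover have "k = {Inf k..Sup k}" "k' = {Inf k'..Sup k'}" using InfSup xk by blast+
      ultimately have "interior {Inf k..Sup k} \<inter> interior {Inf k'..Sup k'} = {}" by metis
      then have "{Inf k..Sup k} \<inter> {Inf k'..Sup k'} \<subseteq> {Inf k, Sup k, Inf k', Sup k'}" by auto
      then have sub: "k \<inter> k' \<subseteq> {Inf k, Sup k, Inf k', Sup k'}" using \<open>k = _\<close> \<open>k' = _\<close> by metis
      have ng: "negligible {Inf k, Sup k, Inf k', Sup k'}" by (rule negligible_finite) simp
      show "negligible (snd xk \<inter> snd xk')" using xk negligible_subset[OF ng sub] by simp
    qed
  qed
  have lenmeas: "sum ?len pN = (\<Sum>xk\<in>pN. measure lebesgue (snd xk))"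
  proof (rule sum.cong)
    fix xk assume "xk \<in> pN"
    moreover obtain x k where "xk = (x,k)" by fastforce
    ultimately have xk: "xk = (x,k)" "(x,k) \<in> p" using subp by auto
    then have "k = {Inf k..Sup k}" "Inf k \<le> Sup k" using InfSup by fastforce+
    then have "measure lebesgue k = Sup k - Inf k" by (metis measure_lebesgue_Icc_aux)
    then show "?len xk = measure lebesgue (snd xk)" using xk by simp
  qed simp
  have subG: "\<Union>(snd ` pN) \<subseteq> G"
  proof
    fix y assume "y \<in> \<Union>(snd ` pN)"
    then obtain x k where "(x,k) \<in> pN" "y \<in> k" by force
    then show "y \<in> G" using InfSup rN by (force simp: pN_def)
  qed
  have "measure lebesgue (\<Union>(snd ` pN)) \<le> measure lebesgue G"
    using measure_mono_fmeasurable[OF subG Um Gm] .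
  then have LN: "sum ?len pN < \<delta>" using measN lenmeas mG by linarith
  have LN0: "sum ?len pN \<ge> 0" using InfSup pU by (intro sum_nonneg) force
  have "(\<Sum>(u,v)\<in>I. \<bar>W v - W u\<bar>) < \<epsilon>"
    using ac\<delta>[OF finI Ibounds Idisj] IL LN \<delta> by linarith
  moreover have "sum ?dW pN \<le> (\<Sum>(x,k)\<in>pN. \<bar>W (Sup k) - W (Inf k)\<bar>)"
    by (rule sum_mono) (auto split: prod.splits)
  ultimately have NW: "sum ?dW pN \<le> \<epsilon>" using IW by linarith
  have bnd: "\<bar>(\<mu>+\<epsilon>) * sum ?len pN\<bar> \<le> (\<bar>\<mu>\<bar>+1) * \<epsilon>"
  proof -
    have "\<bar>(\<mu>+\<epsilon>) * sum ?len pN\<bar> = \<bar>\<mu>+\<epsilon>\<bar> * sum ?len pN" using LN0 by (simp add: abs_mult)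
    also have "\<dots> \<le> (\<bar>\<mu>\<bar>+1) * \<epsilon>" using LN LN0 \<delta> \<epsilon> by (intro mult_mono) auto
    finally show ?thesis .
  qed
  have "W b - W a \<le> \<epsilon> + (\<mu>+\<epsilon>) * sum ?len pO" using sumW2 O O2 NW by linarith
  also have "(\<mu>+\<epsilon>) * sum ?len pO = (\<mu>+\<epsilon>)*(b-a) - (\<mu>+\<epsilon>) * sum ?len pN"
    using sumL2 by (simp add: algebra_simps)
  finally have f1: "W b - W a \<le> \<epsilon> + ((\<mu>+\<epsilon>)*(b-a) - (\<mu>+\<epsilon>) * sum ?len pN)" .
  have f2: "- ((\<mu>+\<epsilon>) * sum ?len pN) \<le> (\<bar>\<mu>\<bar>+1) * \<epsilon>" using bnd by linarith
  have f3: "(\<bar>\<mu>\<bar>+1) * \<epsilon> = \<epsilon>*\<bar>\<mu>\<bar> + \<epsilon>" "(\<mu>+\<epsilon>)*(b-a) = \<mu>*(b-a) + \<epsilon>*(b-a)"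
     "\<epsilon>*(b - a + \<bar>\<mu>\<bar> + 2) = \<epsilon>*(b-a) + \<epsilon>*\<bar>\<mu>\<bar> + 2*\<epsilon>" by (simp_all add: algebra_simps)
  show "W b - W a \<le> \<mu>*(b-a) + \<epsilon>*(b - a + \<bar>\<mu>\<bar> + 2)"
  proof -
    have gen: "\<And>x e A P Q B C R m. x \<le> e + (A - P) \<Longrightarrow> -P \<le> Q \<Longrightarrow> Q = e*m + e \<Longrightarrow> A = B + C \<Longrightarrow> R = C + e*m + 2*e \<Longrightarrow> x \<le> B + (R::real)"
      by linarith
    show ?thesis by (rule gen[OF f1 f2 f3(1) f3(2) f3(3)])
  qed
qed




lemma isolated_countable:
  fixes S :: "real set"
  assumes iso: "\<And>t. t \<in> S \<Longrightarrow> \<exists>r>0. \<forall>s\<in>S. \<bar>s - t\<bar> < r \<longrightarrow> s = t"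
  shows "countable S"
proof -
  obtain r where r: "\<And>t. t \<in> S \<Longrightarrow> r t > 0 \<and> (\<forall>s\<in>S. \<bar>s - t\<bar> < r t \<longrightarrow> s = t)"
    using iso by metis
  have "\<forall>t\<in>S. \<exists>q. q \<in> \<rat> \<and> t - r t / 2 < q \<and> q < t"
  proof
    fix t assume "t \<in> S"
    then have "t - r t / 2 < t" using r by auto
    then show "\<exists>q. q \<in> \<rat> \<and> t - r t / 2 < q \<and> q < t" using Rats_dense_in_real by blast
  qed
  then obtain q where q: "\<And>t. t \<in> S \<Longrightarrow> q t \<in> \<rat> \<and> t - r t / 2 < q t \<and> q t < t"
    by metis
  have inj: "inj_on q S"
  proof (rule inj_onI)
    fix x y assume xy: "x \<in> S" "y \<in> S" "q x = q y"
    have "\<bar>y - x\<bar> < r x \<or> \<bar>x - y\<bar> < r y"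
      using q[OF xy(1)] q[OF xy(2)] xy(3) r[OF xy(1)] r[OF xy(2)] by (auto simp: abs_if)
    then show "x = y" using r xy by force
  qed
  have "countable (q ` S)" by (rule countable_subset[OF _ countable_rat]) (use q in auto)
  then show ?thesis using countable_image_inj_on inj by blast
qed

lemma crossing_countable:
  fixes g :: "real \<Rightarrow> real"
  shows "countable {t. g t = c \<and> (\<exists>D. D \<noteq> 0 \<and> (g has_real_derivative D) (at t))}"
proof (rule isolated_countable)
  fix t assume "t \<in> {t. g t = c \<and> (\<exists>D. D \<noteq> 0 \<and> (g has_real_derivative D) (at t))}"
  then obtain D where t: "g t = c" "D \<noteq> 0" "(g has_real_derivative D) (at t)" by blast
  have "((\<lambda>y. (g y - g t)/(y - t)) \<longlongrightarrow> D) (at t)"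
    using t(3) by (simp add: has_field_derivative_iff)
  then have "\<forall>\<^sub>F y in at t. dist ((g y - g t)/(y - t)) D < \<bar>D\<bar>"
    using tendstoD t(2) by force
  then obtain r where r: "r > 0" and rr: "\<And>y. y \<noteq> t \<Longrightarrow> dist y t < r \<Longrightarrow> dist ((g y - g t)/(y - t)) D < \<bar>D\<bar>"
    unfolding eventually_at by blast
  show "\<exists>r>0. \<forall>s\<in>{t. g t = c \<and> (\<exists>D. D \<noteq> 0 \<and> (g has_real_derivative D) (at t))}. \<bar>s - t\<bar> < r \<longrightarrow> s = t"
  proof (intro exI[of _ r] conjI ballI impI)
    fix s assume s: "s \<in> {t. g t = c \<and> (\<exists>D. D \<noteq> 0 \<and> (g has_real_derivative D) (at t))}" "\<bar>s - t\<bar> < r"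
    show "s = t"
    proof (rule ccontr)
      assume "s \<noteq> t"
      then have "dist ((g s - g t)/(s - t)) D < \<bar>D\<bar>" using rr s(2) by (simp add: dist_real_def)
      moreover have "g s = g t" using s t by simp
      ultimately show False by (simp add: dist_real_def)
    qed
  qed (use r in auto)
qed

lemma phi_lip: "\<bar>\<bar>\<bar>y\<bar> - D\<bar> - \<bar>\<bar>x\<bar> - D\<bar>\<bar> \<le> \<bar>y - (x::real)\<bar>"
  by (auto simp: abs_if)

lemma phi_deriv:
  fixes x D :: real
  assumes "x \<noteq> 0" "\<bar>x\<bar> \<noteq> D" "D > 0"
  shows "((\<lambda>y. \<bar>\<bar>y\<bar> - D\<bar>) has_real_derivative (sgnp x * sgnp (\<bar>x\<bar> - D))) (at x)"
proof -
  consider "x > D" | "0 < x" "x < D" | "x < - D" | "-D < x" "x < 0"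
  proof -
    have "x > D \<or> (0 < x \<and> x < D) \<or> x < - D \<or> (-D < x \<and> x < 0)"
      using assms by (cases "x < 0") (simp_all add: abs_if; arith)+
    then show "(D < x \<Longrightarrow> thesis) \<Longrightarrow> (0 < x \<Longrightarrow> x < D \<Longrightarrow> thesis) \<Longrightarrow> (x < - D \<Longrightarrow> thesis) \<Longrightarrow> (- D < x \<Longrightarrow> x < 0 \<Longrightarrow> thesis) \<Longrightarrow> thesis" by blast
  qed
  then show ?thesis
  proof cases
    case 1
    have "((\<lambda>y. y - D) has_real_derivative 1) (at x)" by (auto intro!: derivative_eq_intros)
    then have "((\<lambda>y. \<bar>\<bar>y\<bar> - D\<bar>) has_real_derivative 1) (at x)"
      by (rule has_field_derivative_transform_within_open[where S="{D<..}"]) (use 1 assms in \<open>auto simp: sgnp_def\<close>)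
    moreover have "sgnp x * sgnp (\<bar>x\<bar> - D) = 1" using 1 assms by (simp add: sgnp_def)
    ultimately show ?thesis by simp
  next
    case 2
    have "((\<lambda>y. D - y) has_real_derivative -1) (at x)" by (auto intro!: derivative_eq_intros)
    then have "((\<lambda>y. \<bar>\<bar>y\<bar> - D\<bar>) has_real_derivative -1) (at x)"
      by (rule has_field_derivative_transform_within_open[where S="{0<..<D}"]) (use 2 assms in \<open>auto simp: sgnp_def\<close>)
    moreover have "sgnp x * sgnp (\<bar>x\<bar> - D) = -1" using 2 assms by (simp add: sgnp_def)
    ultimately show ?thesis by simp
  next
    case 3
    have "((\<lambda>y. - y - D) has_real_derivative -1) (at x)" by (auto intro!: derivative_eq_intros)
    then have "((\<lambda>y. \<bar>\<bar>y\<bar> - D\<bar>) has_real_derivative -1) (at x)"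
      by (rule has_field_derivative_transform_within_open[where S="{..<-D}"]) (use 3 assms in \<open>auto simp: sgnp_def\<close>)
    moreover have "sgnp x * sgnp (\<bar>x\<bar> - D) = -1" using 3 assms by (simp add: sgnp_def)
    ultimately show ?thesis by simp
  next
    case 4
    have "((\<lambda>y. D + y) has_real_derivative 1) (at x)" by (auto intro!: derivative_eq_intros)
    then have "((\<lambda>y. \<bar>\<bar>y\<bar> - D\<bar>) has_real_derivative 1) (at x)"
      by (rule has_field_derivative_transform_within_open[where S="{-D<..<0}"]) (use 4 assms in \<open>auto simp: sgnp_def\<close>)
    moreover have "sgnp x * sgnp (\<bar>x\<bar> - D) = 1" using 4 assms by (simp add: sgnp_def)
    ultimately show ?thesis by simp
  qed
qed

lemma deriv_zero_compare:
  fixes g h :: "real \<Rightarrow> real"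
  assumes "(h has_real_derivative 0) (at t)" "\<And>s. \<bar>g s - g t\<bar> \<le> \<bar>h s - h t\<bar>"
  shows "(g has_real_derivative 0) (at t)"
proof -
  have "((\<lambda>y. (h y - h t)/(y - t)) \<longlongrightarrow> 0) (at t)"
    using assms(1) by (simp add: has_field_derivative_iff)
  then have tt: "((\<lambda>y. \<bar>(h y - h t)/(y - t)\<bar>) \<longlongrightarrow> 0) (at t)" by (rule tendsto_rabs_zero)
  have ev: "eventually (\<lambda>y. norm ((g y - g t)/(y - t)) \<le> \<bar>(h y - h t)/(y - t)\<bar>) (at t)"
    using assms(2) by (auto simp: abs_divide divide_right_mono)
  have "((\<lambda>y. (g y - g t)/(y - t)) \<longlongrightarrow> 0) (at t)"
    by (rule Lim_null_comparison[OF ev tt])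
  then show ?thesis by (simp add: has_field_derivative_iff)
qed

lemma ac_comp:
  fixes z :: "real \<Rightarrow> 'a::real_normed_vector" and F :: "'a \<Rightarrow> 'b::real_normed_vector"
  assumes ac: "abs_cont_on a b z" and L: "L > 0" and lip: "\<And>x y. norm (F x - F y) \<le> L * norm (x - y)"
  shows "abs_cont_on a b (\<lambda>t. F (z t))"
  unfolding abs_cont_on_def
proof (intro allI impI)
  fix \<epsilon> :: real assume "\<epsilon> > 0"
  then have "\<epsilon>/L > 0" using L by simp
  then obtain \<delta> where \<delta>: "\<delta> > 0" and H: "\<forall>I :: (real \<times> real) set.
        finite I \<and> (\<forall>(u,v)\<in>I. a \<le> u \<and> u \<le> v \<and> v \<le> b)
        \<and> disjoint_family_on (\<lambda>(u,v). {u<..<v}) I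
        \<and> (\<Sum>(u,v)\<in>I. v - u) < \<delta>
        \<longrightarrow> (\<Sum>(u,v)\<in>I. norm (z v - z u)) < \<epsilon>/L"
    using ac unfolding abs_cont_on_def by meson
  show "\<exists>\<delta>>0. \<forall>I :: (real \<times> real) set.
        finite I \<and> (\<forall>(u,v)\<in>I. a \<le> u \<and> u \<le> v \<and> v \<le> b)
        \<and> disjoint_family_on (\<lambda>(u,v). {u<..<v}) I
        \<and> (\<Sum>(u,v)\<in>I. v - u) < \<delta>
        \<longrightarrow> (\<Sum>(u,v)\<in>I. norm (F (z v) - F (z u))) < \<epsilon>"
  proof (intro exI[of _ \<delta>] conjI allI impI)
    fix I :: "(real \<times> real) set"
    assume hI: "finite I \<and> (\<forall>(u,v)\<in>I. a \<le> u \<and> u \<le> v \<and> v \<le> b)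
        \<and> disjoint_family_on (\<lambda>(u,v). {u<..<v}) I \<and> (\<Sum>(u,v)\<in>I. v - u) < \<delta>"
    then have s1: "(\<Sum>(u,v)\<in>I. norm (z v - z u)) < \<epsilon>/L" using H by blast
    have "(\<Sum>(u,v)\<in>I. norm (F (z v) - F (z u))) \<le> (\<Sum>(u,v)\<in>I. L * norm (z v - z u))"
      by (rule sum_mono) (auto simp: lip)
    also have "\<dots> = L * (\<Sum>(u,v)\<in>I. norm (z v - z u))"
      by (simp add: sum_distrib_left case_prod_unfold)
    also have "\<dots> < L * (\<epsilon>/L)" by (rule mult_strict_left_mono[OF s1 L])
    also have "\<dots> = \<epsilon>" using L by simp
    finally show "(\<Sum>(u,v)\<in>I. norm (F (z v) - F (z u))) < \<epsilon>" .
  qed (use \<delta> in auto)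
qed




definition Gf :: "nat \<Rightarrow> (nat \<Rightarrow> real) \<Rightarrow> (nat \<Rightarrow> real) \<Rightarrow> nat \<Rightarrow> real" where
  "Gf n k \<sigma> i = (if 2 \<le> i then \<sigma> (i-1) else 0) - (k i + 1) * \<sigma> i + (if i \<le> n-2 then k (i+1) * \<sigma> (i+1) else 0)"

lemma fcomp_Gf: "fcomp n k d zc i = Gf n k (sfun d zc) i"
  by (simp add: fcomp_def Gf_def)

lemma shift_sum:
  fixes h :: "nat \<Rightarrow> real"
  assumes "n \<ge> 3"
  shows "(\<Sum>i=1..n-1. if 2 \<le> i then h i else 0) = (\<Sum>i=1..n-1. if i \<le> n-2 then h (i+1) else (0::real))"
proof -
  have "(\<Sum>i=1..n-1. if 2 \<le> i then h i else 0) = sum h {i\<in>{1..n-1}. 2 \<le> i}"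
    by (rule sum.inter_filter[symmetric]) simp
  also have "{i\<in>{1..n-1}. 2 \<le> i} = {1+1..(n-2)+1}" using assms by auto
  also have "sum h {1+1..(n-2)+1} = (\<Sum>i=1..n-2. h (i+1))" by (rule sum.shift_bounds_cl_nat_ivl)
  also have "{1..n-2} = {i\<in>{1..n-1}. i \<le> n-2}" using assms by auto
  also have "(\<Sum>i\<in>{i\<in>{1..n-1}. i \<le> n-2}. h (i+1)) = (\<Sum>i=1..n-1. if i \<le> n-2 then h (i+1) else 0)"
    by (rule sum.inter_filter) simp
  finally show ?thesis .
qed

lemma k_ge1:
  fixes n :: nat and k :: "nat \<Rightarrow> real"
  assumes n3: "n \<ge> 3" and kmid: "\<forall>i\<in>{2..n-2}. k i \<ge> k (i + 1) + 1" and klast: "k (n - 1) \<ge> (1::real)"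
  shows "\<And>i. i \<in> {2..n-1} \<Longrightarrow> k i \<ge> 1"
proof -
  have "\<forall>j. j \<le> n-3 \<longrightarrow> k (n-1-j) \<ge> 1"
  proof
    fix j :: nat show "j \<le> n-3 \<longrightarrow> k (n-1-j) \<ge> 1"
    proof (induction j)
      case 0 then show ?case using klast by simp
    next
      case (Suc j)
      show ?case
      proof
        assume "Suc j \<le> n-3"
        then have "k (n-1-j) \<ge> 1" using Suc by simp
        moreover have "n-1-Suc j \<in> {2..n-2}" using \<open>Suc j \<le> n-3\<close> n3 by auto
        moreover have "n-1-Suc j + 1 = n-1-j" using \<open>Suc j \<le> n-3\<close> n3 by auto
        ultimately show "k (n-1-Suc j) \<ge> 1" using kmid by fastforce
      qed
    qed
  qed
  fix i assume "i \<in> {2..n-1}"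
  then have "n-1-(n-1-i) = i" "n-1-i \<le> n-3" by auto
  then show "k i \<ge> 1" using \<open>\<forall>j. _\<close> by metis
qed

lemma quad:
  fixes n :: nat and k \<tau> :: "nat \<Rightarrow> real"
  assumes n3: "n \<ge> 3" and k1: "k 1 \<ge> k 2" and kmid: "\<forall>i\<in>{2..n-2}. k i \<ge> k (i + 1) + 1"
    and klast: "k (n - 1) \<ge> 1"
  shows "(\<Sum>i=1..n-1. \<tau> i * Gf n k \<tau> i) \<le> -(1/2) * (\<Sum>i=1..n-1. (\<tau> i)^2)"
proof -
  have kge: "\<And>i. i \<in> {2..n-1} \<Longrightarrow> k i \<ge> 1" using k_ge1[OF n3 kmid klast] by blast
  have "(2::nat) \<in> {2..n-1}" using n3 by auto
  then have k1ge: "k 1 \<ge> 1" using k1 kge[of 2] by auto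
  let ?A = "{1..n-1}"
  have S1: "(\<Sum>i\<in>?A. \<tau> i * Gf n k \<tau> i) = (\<Sum>i\<in>?A. (if 2 \<le> i then \<tau> i * \<tau> (i-1) else 0))
      + (\<Sum>i\<in>?A. - (k i + 1) * (\<tau> i)^2 + (if i \<le> n-2 then k (i+1) * \<tau> i * \<tau> (i+1) else 0))"
    unfolding sum.distrib[symmetric] by (rule sum.cong) (auto simp: Gf_def algebra_simps power2_eq_square)
  also have "(\<Sum>i\<in>?A. (if 2 \<le> i then \<tau> i * \<tau> (i-1) else 0)) = (\<Sum>i\<in>?A. (if i \<le> n-2 then \<tau> (i+1) * \<tau> (i+1-1) else 0))"
    by (rule shift_sum[OF n3])
  also have "\<dots> + (\<Sum>i\<in>?A. - (k i + 1) * (\<tau> i)^2 + (if i \<le> n-2 then k (i+1) * \<tau> i * \<tau> (i+1) else 0))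
      = (\<Sum>i\<in>?A. - (k i + 1) * (\<tau> i)^2 + (if i \<le> n-2 then (k (i+1) + 1) * (\<tau> i * \<tau> (i+1)) else 0))"
    unfolding sum.distrib[symmetric] by (rule sum.cong) (auto simp: algebra_simps)
  also have "\<dots> \<le> (\<Sum>i\<in>?A. - (k i + 1) * (\<tau> i)^2 + (if i \<le> n-2 then (k (i+1) + 1)/2 * (\<tau> i)^2 else 0)
        + (if i \<le> n-2 then (k (i+1) + 1)/2 * (\<tau> (i+1))^2 else 0))"
  proof (rule sum_mono)
    fix i assume i: "i \<in> ?A"
    show "- (k i + 1) * (\<tau> i)^2 + (if i \<le> n-2 then (k (i+1) + 1) * (\<tau> i * \<tau> (i+1)) else 0)
        \<le> - (k i + 1) * (\<tau> i)^2 + (if i \<le> n-2 then (k (i+1) + 1)/2 * (\<tau> i)^2 else 0)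
        + (if i \<le> n-2 then (k (i+1) + 1)/2 * (\<tau> (i+1))^2 else 0)"
    proof (cases "i \<le> n-2")
      case True
      then have "k (i+1) \<ge> 1" using kge i by auto
      moreover have "2 * (\<tau> i * \<tau> (i+1)) \<le> (\<tau> i)^2 + (\<tau> (i+1))^2"
        using sum_squares_bound[of "\<tau> i" "\<tau> (i+1)"] by (simp add: algebra_simps power2_eq_square)
      ultimately have "(k (i+1) + 1) * (2 * (\<tau> i * \<tau> (i+1))) \<le> (k (i+1) + 1) * ((\<tau> i)^2 + (\<tau> (i+1))^2)"
        by (intro mult_left_mono) auto
      then show ?thesis using True by (simp add: field_simps)
    qed simp
  qed
  also have "\<dots> = (\<Sum>i\<in>?A. - (k i + 1) * (\<tau> i)^2 + (if i \<le> n-2 then (k (i+1) + 1)/2 * (\<tau> i)^2 else 0))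
        + (\<Sum>i\<in>?A. if i \<le> n-2 then (k (i+1) + 1)/2 * (\<tau> (i+1))^2 else 0)"
    by (simp add: sum.distrib)
  also have "(\<Sum>i\<in>?A. if i \<le> n-2 then (k (i+1) + 1)/2 * (\<tau> (i+1))^2 else 0)
     = (\<Sum>i\<in>?A. if 2 \<le> i then (k i + 1)/2 * (\<tau> i)^2 else 0)"
    by (rule shift_sum[OF n3, symmetric])
  also have "(\<Sum>i\<in>?A. - (k i + 1) * (\<tau> i)^2 + (if i \<le> n-2 then (k (i+1) + 1)/2 * (\<tau> i)^2 else 0))
        + (\<Sum>i\<in>?A. if 2 \<le> i then (k i + 1)/2 * (\<tau> i)^2 else 0)
      = (\<Sum>i\<in>?A. (- (k i + 1) + (if i \<le> n-2 then (k (i+1) + 1)/2 else 0) + (if 2 \<le> i then (k i + 1)/2 else 0)) * (\<tau> i)^2)"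
    unfolding sum.distrib[symmetric] by (rule sum.cong) (auto simp: algebra_simps)
  also have "\<dots> \<le> (\<Sum>i\<in>?A. (-1/2) * (\<tau> i)^2)"
  proof (rule sum_mono)
    fix i assume i: "i \<in> ?A"
    have "- (k i + 1) + (if i \<le> n-2 then (k (i+1) + 1)/2 else 0) + (if 2 \<le> i then (k i + 1)/2 else 0) \<le> -1/2"
    proof -
      consider "i = 1" | "2 \<le> i" "i \<le> n-2" | "i = n-1" using i by fastforce
      then show ?thesis
      proof cases
        case 1
        have k2: "k (Suc (Suc 0)) = k 2" by (simp add: numeral_2_eq_2)
        show ?thesis using 1 k1 k1ge n3 k2 by (auto simp: field_simps)
      next
        case 2
        then have "k i \<ge> k (i+1) + 1" using kmid by auto
        then show ?thesis using 2 by (auto simp: field_simps)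
      next
        case 3
        then have "k i \<ge> 1" using kge n3 by auto
        then show ?thesis using 3 n3 by (auto simp: field_simps)
      qed
    qed
    then show "(- (k i + 1) + (if i \<le> n-2 then (k (i+1) + 1)/2 else 0) + (if 2 \<le> i then (k i + 1)/2 else 0)) * (\<tau> i)^2 \<le> (-1/2) * (\<tau> i)^2"
      by (intro mult_right_mono) auto
  qed
  also have "\<dots> = -(1/2) * (\<Sum>i\<in>?A. (\<tau> i)^2)" by (simp add: sum_distrib_left)
  finally show ?thesis by simp
qed




lemma sfun_pm: "\<bar>sfun d zc i\<bar> = 1"
  by (simp add: sfun_def sgnp_def)

lemma sgn_loc:
  fixes x y D :: real
  assumes "x \<noteq> 0" "\<bar>x\<bar> \<noteq> D" "\<bar>y - x\<bar> < \<bar>x\<bar>" "\<bar>y - x\<bar> < \<bar>\<bar>x\<bar> - D\<bar>"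
  shows "sgnp y * sgnp (\<bar>y\<bar> - D) = sgnp x * sgnp (\<bar>x\<bar> - D)"
proof -
  have "sgnp y = sgnp x" using assms(1,3) by (auto simp: sgnp_def abs_if split: if_splits)
  moreover have "sgnp (\<bar>y\<bar> - D) = sgnp (\<bar>x\<bar> - D)"
  proof -
    have "\<bar>\<bar>y\<bar> - \<bar>x\<bar>\<bar> \<le> \<bar>y - x\<bar>" by (rule abs_triangle_ineq3)
    then show ?thesis using assms(2,4) by (auto simp: sgnp_def abs_if split: if_splits)
  qed
  ultimately show ?thesis by simp
qed

lemma Gf_cong:
  assumes "i \<in> {1..n-1}" "\<forall>l\<in>{1..n-1}. \<sigma> l = \<sigma>' l"
  shows "Gf n k \<sigma> i = Gf n k \<sigma>' i"
proof -
  have "2 \<le> i \<Longrightarrow> i-1 \<in> {1..n-1}" using assms(1) by auto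
  then have "2 \<le> i \<Longrightarrow> \<sigma> (i-1) = \<sigma>' (i-1)" using assms(2) by blast
  have "i \<le> n-2 \<Longrightarrow> i+1 \<in> {1..n-1}" using assms(1) by auto
  then have "i \<le> n-2 \<Longrightarrow> \<sigma> (i+1) = \<sigma>' (i+1)" using assms(2) by blast
  moreover note \<open>2 \<le> i \<Longrightarrow> \<sigma> (i-1) = \<sigma>' (i-1)\<close>
  moreover have "\<sigma> i = \<sigma>' i" using assms by auto
  ultimately show ?thesis by (simp add: Gf_def)
qed

lemma finite_pos_min:
  assumes "finite A" "\<And>i. i \<in> A \<Longrightarrow> m i > (0::real)"
  shows "\<exists>\<delta>>0. \<forall>i\<in>A. \<delta> \<le> m i"
proof -
  define \<delta> where "\<delta> = Min (insert 1 (m ` A))"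
  have "\<delta> > 0" using assms by (simp add: \<delta>_def)
  moreover have "\<forall>i\<in>A. \<delta> \<le> m i" using assms by (simp add: \<delta>_def)
  ultimately show ?thesis by blast
qed

lemma kras_box:
  fixes e :: "nat \<Rightarrow> 'm::finite" and z v :: "real^'m"
  assumes enum: "bij_betw e {1..n-1} UNIV" and v: "v \<in> krasowskii (vfield n e k d) z"
  shows "\<exists>\<tau>. (\<forall>i\<in>{1..n-1}. \<bar>\<tau> i\<bar> \<le> 1)
     \<and> (\<forall>i\<in>{1..n-1}. coords e z i \<noteq> 0 \<and> \<bar>coords e z i\<bar> \<noteq> d i \<longrightarrow> \<tau> i = sfun d (coords e z) i)
     \<and> (\<forall>i\<in>{1..n-1}. v $ e i = Gf n k \<tau> i)"
proof -
  let ?A = "{1..n-1}"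
  define ie where "ie = inv_into ?A e"
  have ie1: "\<And>i. i \<in> ?A \<Longrightarrow> ie (e i) = i"
    using enum unfolding ie_def bij_betw_def by (simp add: inv_into_f_f)
  have surj: "\<And>j. j \<in> e ` ?A" using enum unfolding bij_betw_def by auto
  have ie2a: "\<And>j. e (ie j) = j" unfolding ie_def using surj by (rule f_inv_into_f)
  have ie2b: "\<And>j. ie j \<in> ?A" unfolding ie_def using surj by (rule inv_into_into)
  note ie2 = ie2a ie2b
  define zc where "zc = coords e z"
  define off where "off i \<longleftrightarrow> zc i \<noteq> 0 \<and> \<bar>zc i\<bar> \<noteq> d i" for i
  define m where "m i = min \<bar>zc i\<bar> \<bar>\<bar>zc i\<bar> - d i\<bar>" for i
  obtain \<delta> where \<delta>: "\<delta> > 0" "\<forall>i\<in>{i\<in>?A. off i}. \<delta> \<le> m i"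
    using finite_pos_min[of "{i\<in>?A. off i}" m] by (force simp: m_def off_def)
  define lo :: "real^'m" where "lo = (\<chi> j. if off (ie j) then sfun d zc (ie j) else -1)"
  define hi :: "real^'m" where "hi = (\<chi> j. if off (ie j) then sfun d zc (ie j) else 1)"
  define Fm :: "real^'m \<Rightarrow> real^'m" where "Fm w = (\<chi> j. Gf n k (\<lambda>i. w $ e i) (ie j))" for w
  have lin: "linear Fm"
    by (rule linearI) (auto simp: Fm_def vec_eq_iff Gf_def algebra_simps)
  define B where "B = Fm ` cbox lo hi"
  have cB: "convex B" unfolding B_def by (rule convex_linear_image[OF lin]) simp
  have "compact B" unfolding B_def
    using lin by (intro compact_continuous_image linear_continuous_on) (auto simp: linear_conv_bounded_linear)
  then have clB: "closed B" by (rule compact_imp_closed)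
  have sub: "vfield n e k d ` ball z \<delta> \<subseteq> B"
  proof
    fix y assume "y \<in> vfield n e k d ` ball z \<delta>"
    then obtain z' where z': "z' \<in> ball z \<delta>" "y = vfield n e k d z'" by blast
    define w :: "real^'m" where "w = (\<chi> j. sfun d (coords e z') (ie j))"
    have wc: "w \<in> cbox lo hi"
      unfolding mem_box_cart
    proof
      fix j
      have i: "ie j \<in> ?A" by (rule ie2)
      show "lo $ j \<le> w $ j \<and> w $ j \<le> hi $ j"
      proof (cases "off (ie j)")
        case True
        have "\<bar>coords e z' (ie j) - zc (ie j)\<bar> \<le> norm (z' - z)"
          using component_le_norm_cart[of "z' - z" j] ie2(1)[of j] by (simp add: coords_def zc_def)
        also have "\<dots> < \<delta>" using z'(1) by (simp add: dist_norm norm_minus_commute)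
        also have "\<delta> \<le> m (ie j)" using \<delta>(2) i True by blast
        finally have "\<bar>coords e z' (ie j) - zc (ie j)\<bar> < m (ie j)" .
        then have "sfun d (coords e z') (ie j) = sfun d zc (ie j)"
          using True unfolding sfun_def m_def off_def by (intro sgn_loc) auto
        then show ?thesis using True by (simp add: lo_def hi_def w_def)
      next
        case False
        have "sfun d (coords e z') (ie j) = 1 \<or> sfun d (coords e z') (ie j) = -1" by (simp add: sfun_def sgnp_def)
        then show ?thesis using False by (auto simp: lo_def hi_def w_def)
      qed
    qed
    have "y = Fm w"
      unfolding z'(2) vfield_def Fm_def vec_eq_iff
    proof
      fix j
      show "(\<chi> j. fcomp n k d (coords e z') (inv_into ?A e j)) $ j = (\<chi> j. Gf n k (\<lambda>i. w $ e i) (ie j)) $ j"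
        unfolding fcomp_Gf ie_def[symmetric]
        by simp (rule Gf_cong[OF ie2(2)], simp add: w_def ie1)
    qed
    then show "y \<in> B" using wc by (simp add: B_def)
  qed
  have "closure (convex hull (vfield n e k d ` ball z \<delta>)) \<subseteq> B"
    by (rule closure_minimal[OF hull_minimal[where S=convex, OF sub cB] clB])
  moreover have "v \<in> closure (convex hull (vfield n e k d ` ball z \<delta>))"
    using v \<delta>(1) unfolding krasowskii_def by blast
  ultimately have "v \<in> B" by blast
  then obtain w0 where w0: "w0 \<in> cbox lo hi" "v = Fm w0" by (auto simp: B_def)
  define \<tau> where "\<tau> i = w0 $ e i" for i
  show ?thesis
  proof (intro exI[of _ \<tau>] conjI ballI impI)
    fix i assume i: "i \<in> ?A"
    have b: "lo $ e i \<le> w0 $ e i" "w0 $ e i \<le> hi $ e i" using w0(1) unfolding mem_box_cart by auto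
    have "sfun d zc i = 1 \<or> sfun d zc i = -1" by (simp add: sfun_def sgnp_def)
    then have "lo $ e i \<ge> -1" "hi $ e i \<le> 1" using ie1[OF i] by (auto simp: lo_def hi_def)
    then show "\<bar>\<tau> i\<bar> \<le> 1" using b by (simp add: \<tau>_def)
    show "v $ e i = Gf n k \<tau> i" using w0(2) ie1[OF i] by (simp add: Fm_def \<tau>_def[abs_def])
    assume "coords e z i \<noteq> 0 \<and> \<bar>coords e z i\<bar> \<noteq> d i"
    then have "off i" by (simp add: off_def zc_def)
    then have "lo $ e i = sfun d zc i" "hi $ e i = sfun d zc i" using ie1[OF i] by (simp_all add: lo_def hi_def)
    then show "\<tau> i = sfun d (coords e z) i" using b by (simp add: \<tau>_def zc_def)
  qed
qed




lemma ac_sub: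
  assumes "abs_cont_on a' b' z" "a' \<le> a" "b \<le> b'"
  shows "abs_cont_on a b z"
  using assms unfolding abs_cont_on_def
  by (smt (verit, best) case_prodI2 case_prod_unfold)

lemma comp_deriv:
  fixes z :: "real \<Rightarrow> real^'m"
  assumes "(z has_vector_derivative v) (at t)"
  shows "((\<lambda>s. z s $ j) has_real_derivative v $ j) (at t)"
proof -
  have "((\<lambda>s. z s $ j) has_vector_derivative v $ j) (at t)"
    using bounded_linear.has_vector_derivative[OF bounded_linear_vec_nth assms] .
  then show ?thesis by (simp add: has_real_derivative_iff_has_vector_derivative)
qed

theorem theorem1:
  fixes n :: nat and e :: "nat \<Rightarrow> 'm::finite" and k d :: "nat \<Rightarrow> real"
    and z :: "real \<Rightarrow> real ^ 'm"
  assumes n3: "n \<ge> 3"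
    and dim: "CARD('m) = n - 1"
    and enum: "bij_betw e {1..n-1} UNIV"
    and dpos: "\<forall>i\<in>{1..n-1}. d i > 0"
    and k1: "k 1 \<ge> k 2"
    and kmid: "\<forall>i\<in>{2..n-2}. k i \<ge> k (i + 1) + 1"
    and klast: "k (n - 1) \<ge> 1"
    and sol: "krasowskii_solution (vfield n e k d) z"
  shows "((\<lambda>t. infdist (z t) (Eset n e d)) \<longlongrightarrow> 0) at_top"
proof -
  let ?A = "{1..n-1}"
  let ?E = "Eset n e d"
  define V :: "real^'m \<Rightarrow> real" where "V x = (\<Sum>i\<in>?A. \<bar>\<bar>x $ e i\<bar> - d i\<bar>)" for x
  define Lc where "Lc = 1 + (\<Sum>i\<in>?A. 2 + \<bar>k i\<bar> + \<bar>k (i+1)\<bar>)"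
  have Lc0: "Lc > 0" unfolding Lc_def by (smt (verit, best) abs_ge_zero sum_nonneg)
  have ac0: "\<And>T. T \<ge> 0 \<Longrightarrow> abs_cont_on 0 T z" using sol by (simp add: krasowskii_solution_def)
  have acab: "\<And>a b. 0 \<le> a \<Longrightarrow> a \<le> b \<Longrightarrow> abs_cont_on a b z"
    using ac0 ac_sub by (meson order_refl order_trans)
  have ae: "AE t in lebesgue. 0 < t \<longrightarrow> (\<exists>v. (z has_vector_derivative v) (at t) \<and> v \<in> krasowskii (vfield n e k d) (z t))"
    using sol by (simp add: krasowskii_solution_def)
  from ae obtain N0 where N0: "{t \<in> space lebesgue. \<not> (0 < t \<longrightarrow> (\<exists>v. (z has_vector_derivative v) (at t) \<and> v \<in> krasowskii (vfield n e k d) (z t)))} \<subseteq> N0"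
    "emeasure lebesgue N0 = 0" "N0 \<in> sets lebesgue"
    by (rule AE_E)
  have negN0: "negligible N0" using N0(2,3) by (simp add: negligible_iff_null_sets null_sets_def)
  define C where "C = (\<Union>i\<in>?A. \<Union>c\<in>{0, d i, - d i}. {t. z t $ e i = c \<and> (\<exists>D. D \<noteq> 0 \<and> ((\<lambda>s. z s $ e i) has_real_derivative D) (at t))})"
  have cC: "countable C" unfolding C_def
  proof (intro countable_UN)
    show "countable ?A" by (rule countable_finite) simp
    fix i show "countable {0, d i, - d i}" by simp
    fix c show "countable {t. z t $ e i = c \<and> (\<exists>D. D \<noteq> 0 \<and> ((\<lambda>s. z s $ e i) has_real_derivative D) (at t))}"
      by (rule crossing_countable)
  qed
  have negC: "negligible C"
  proof -
    have "negligible (\<Union>((\<lambda>t. {t}) ` C))"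
      by (rule negligible_countable_Union) (use cC in auto)
    then show ?thesis by simp
  qed
  define Nb where "Nb = N0 \<union> C \<union> {0}"
  have negNb: "negligible Nb" unfolding Nb_def using negN0 negC by auto
  have good: "\<exists>v \<tau>. (z has_vector_derivative v) (at t) \<and> (\<forall>j. \<bar>v $ j\<bar> \<le> Lc)
      \<and> ((\<lambda>s. V (z s)) has_real_derivative (\<Sum>i\<in>?A. \<tau> i * v $ e i)) (at t)
      \<and> (\<Sum>i\<in>?A. \<tau> i * v $ e i) \<le> 0
      \<and> (z t \<notin> ?E \<longrightarrow> (\<Sum>i\<in>?A. \<tau> i * v $ e i) \<le> -1/2)"
    if t: "0 \<le> t" "t \<notin> Nb" for t
  proof -
    have "t > 0" using t by (auto simp: Nb_def)
    moreover have "t \<notin> N0" using t by (auto simp: Nb_def)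
    ultimately obtain v where v: "(z has_vector_derivative v) (at t)" "v \<in> krasowskii (vfield n e k d) (z t)"
      using N0(1) by auto
    obtain \<tau> where \<tau>1: "\<forall>i\<in>?A. \<bar>\<tau> i\<bar> \<le> 1"
      and \<tau>2: "\<forall>i\<in>?A. coords e (z t) i \<noteq> 0 \<and> \<bar>coords e (z t) i\<bar> \<noteq> d i \<longrightarrow> \<tau> i = sfun d (coords e (z t)) i"
      and \<tau>3: "\<forall>i\<in>?A. v $ e i = Gf n k \<tau> i"
      using kras_box[OF enum v(2)] by blast
    have surj: "\<And>j. j \<in> e ` ?A" using enum unfolding bij_betw_def by auto
    have vb: "\<bar>v $ j\<bar> \<le> Lc" for j
    proof -
      obtain i where i: "i \<in> ?A" "j = e i" using surj[of j] by blast
      have "\<bar>Gf n k \<tau> i\<bar> \<le> 2 + \<bar>k i\<bar> + \<bar>k (i+1)\<bar>"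
      proof -
        have a1: "\<bar>(if 2 \<le> i then \<tau> (i-1) else 0)\<bar> \<le> 1"
        proof (cases "2 \<le> i")
          case True
          then have "i - 1 \<in> ?A" using i(1) by auto
          then show ?thesis using \<tau>1 True by auto
        qed simp
        have a2: "\<bar>(k i + 1) * \<tau> i\<bar> \<le> \<bar>k i\<bar> + 1"
        proof -
          have "\<bar>(k i + 1) * \<tau> i\<bar> = \<bar>k i + 1\<bar> * \<bar>\<tau> i\<bar>" by (simp add: abs_mult)
          also have "\<dots> \<le> \<bar>k i + 1\<bar> * 1" using \<tau>1 i(1) by (intro mult_left_mono) auto
          finally show ?thesis by simp
        qed
        have a3: "\<bar>(if i \<le> n-2 then k (i+1) * \<tau> (i+1) else 0)\<bar> \<le> \<bar>k (i+1)\<bar>"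
        proof (cases "i \<le> n-2")
          case True
          then have "i + 1 \<in> ?A" using i(1) by auto
          then have "\<bar>\<tau> (i+1)\<bar> \<le> 1" using \<tau>1 by blast
          then have "\<bar>k (i+1)\<bar> * \<bar>\<tau> (i+1)\<bar> \<le> \<bar>k (i+1)\<bar> * 1" by (intro mult_left_mono) auto
          then show ?thesis using True by (simp add: abs_mult)
        qed simp
        show ?thesis unfolding Gf_def using a1 a2 a3 by linarith
      qed
      also have "\<dots> \<le> (\<Sum>i\<in>?A. 2 + \<bar>k i\<bar> + \<bar>k (i+1)\<bar>)"
        using i(1) by (intro member_le_sum) auto
      finally show ?thesis using \<tau>3 i by (simp add: Lc_def)
    qed
    have dcomp: "((\<lambda>s. \<bar>\<bar>z s $ e i\<bar> - d i\<bar>) has_real_derivative \<tau> i * v $ e i) (at t)" if i: "i \<in> ?A" for i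
    proof (cases "z t $ e i \<noteq> 0 \<and> \<bar>z t $ e i\<bar> \<noteq> d i")
      case True
      have "((\<lambda>y. \<bar>\<bar>y\<bar> - d i\<bar>) has_real_derivative (sgnp (z t $ e i) * sgnp (\<bar>z t $ e i\<bar> - d i))) (at (z t $ e i))"
        using True dpos i by (intro phi_deriv) auto
      from DERIV_chain2[OF this comp_deriv[OF v(1)]]
      have "((\<lambda>s. \<bar>\<bar>z s $ e i\<bar> - d i\<bar>) has_real_derivative (sgnp (z t $ e i) * sgnp (\<bar>z t $ e i\<bar> - d i)) * v $ e i) (at t)" .
      moreover have "\<tau> i = sgnp (z t $ e i) * sgnp (\<bar>z t $ e i\<bar> - d i)"
        using \<tau>2 i True by (simp add: coords_def sfun_def)
      ultimately show ?thesis by simp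
    next
      case False
      then have zc: "z t $ e i \<in> {0, d i, - d i}" by (auto simp: abs_if split: if_splits)
      have "v $ e i = 0"
      proof (rule ccontr)
        assume "v $ e i \<noteq> 0"
        then have "t \<in> C" unfolding C_def using zc i comp_deriv[OF v(1), of "e i"] by blast
        then show False using t by (simp add: Nb_def)
      qed
      then have "((\<lambda>s. z s $ e i) has_real_derivative 0) (at t)" using comp_deriv[OF v(1), of "e i"] by simp
      then have "((\<lambda>s. \<bar>\<bar>z s $ e i\<bar> - d i\<bar>) has_real_derivative 0) (at t)"
        by (rule deriv_zero_compare) (rule phi_lip)
      then show ?thesis using \<open>v $ e i = 0\<close> by simp
    qed
    have dV: "((\<lambda>s. V (z s)) has_real_derivative (\<Sum>i\<in>?A. \<tau> i * v $ e i)) (at t)"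
      unfolding V_def by (rule DERIV_sum) (rule dcomp)
    have eqG: "(\<Sum>i\<in>?A. \<tau> i * v $ e i) = (\<Sum>i\<in>?A. \<tau> i * Gf n k \<tau> i)"
      using \<tau>3 by simp
    have Q: "(\<Sum>i\<in>?A. \<tau> i * v $ e i) \<le> -(1/2) * (\<Sum>i\<in>?A. (\<tau> i)^2)"
      unfolding eqG by (rule quad[OF n3 k1 kmid klast])
    have Q0: "(\<Sum>i\<in>?A. \<tau> i * v $ e i) \<le> 0"
      using Q sum_nonneg[of ?A "\<lambda>i. (\<tau> i)^2"] by force
    have Q1: "(\<Sum>i\<in>?A. \<tau> i * v $ e i) \<le> -1/2" if nE: "z t \<notin> ?E"
    proof -
      have "\<exists>i\<in>?A. coords e (z t) i \<noteq> 0 \<and> \<bar>coords e (z t) i\<bar> \<noteq> d i"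
      proof (rule ccontr)
        assume "\<not> ?thesis"
        then have "\<forall>i\<in>?A. \<bar>coords e (z t) i\<bar> * \<bar>\<bar>coords e (z t) i\<bar> - d i\<bar> = 0" by auto
        then have "(\<Sum>i=1..n-1. \<bar>coords e (z t) i\<bar> * \<bar>\<bar>coords e (z t) i\<bar> - d i\<bar>) = 0"
          by (intro sum.neutral) blast
        then have "z t \<in> ?E" by (simp add: Eset_def)
        then show False using nE by simp
      qed
      then obtain i where i: "i \<in> ?A" "coords e (z t) i \<noteq> 0 \<and> \<bar>coords e (z t) i\<bar> \<noteq> d i" by blast
      then have "\<tau> i = sfun d (coords e (z t)) i" using \<tau>2 by blast
      moreover have "sfun d (coords e (z t)) i = 1 \<or> sfun d (coords e (z t)) i = -1" by (simp add: sfun_def sgnp_def)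
      ultimately have "(\<tau> i)^2 = 1" by auto
      then have "1 \<le> (\<Sum>i\<in>?A. (\<tau> i)^2)" using i(1) member_le_sum[of i ?A "\<lambda>i. (\<tau> i)^2"] by auto
      then show ?thesis using Q by linarith
    qed
    show ?thesis using v(1) vb dV Q0 Q1 by blast
  qed
  have comp_bound: "\<bar>z b $ j - z a $ j\<bar> \<le> Lc * (b - a)" if ab: "0 \<le> a" "a \<le> b" for a b j
  proof -
    have cn: "\<bar>x $ j - y $ j\<bar> \<le> norm (x - y)" for x y :: "real^'m"
      using component_le_norm_cart[of "x - y" j] by simp
    have acj: "abs_cont_on a b (\<lambda>t. z t $ j)"
      by (rule ac_comp[OF acab[OF ab], where L=1]) (use cn in \<open>simp_all add: real_norm_def\<close>)
    have cn': "\<bar>- (x $ j) - - (y $ j)\<bar> \<le> norm (x - y)" for x y :: "real^'m"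
    proof -
      have "\<bar>- (x $ j) - - (y $ j)\<bar> = \<bar>x $ j - y $ j\<bar>" by linarith
      then show ?thesis using cn[of x y] by linarith
    qed
    have acj': "abs_cont_on a b (\<lambda>t. - (z t $ j))"
      by (rule ac_comp[OF acab[OF ab], where L=1]) (use cn' in \<open>simp_all add: real_norm_def\<close>)
    have "(\<lambda>t. z t $ j) b - (\<lambda>t. z t $ j) a \<le> Lc * (b - a)"
    proof (rule gauge_mono[OF ab(2) negNb acj])
      fix t assume "t \<in> {a..b}" "t \<notin> Nb"
      then obtain v where v: "(z has_vector_derivative v) (at t)" "\<forall>j. \<bar>v $ j\<bar> \<le> Lc"
        using good[of t] ab by auto
      have "v $ j \<le> Lc" using v(2) abs_ge_self order_trans by blast
      then show "\<exists>w. ((\<lambda>t. z t $ j) has_real_derivative w) (at t) \<and> w \<le> Lc"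
        using comp_deriv[OF v(1)] by blast
    qed
    moreover have "(\<lambda>t. - (z t $ j)) b - (\<lambda>t. - (z t $ j)) a \<le> Lc * (b - a)"
    proof (rule gauge_mono[OF ab(2) negNb acj'])
      fix t assume "t \<in> {a..b}" "t \<notin> Nb"
      then obtain v where v: "(z has_vector_derivative v) (at t)" "\<forall>j. \<bar>v $ j\<bar> \<le> Lc"
        using good[of t] ab by auto
      have "- (v $ j) \<le> Lc" using v(2) abs_ge_minus_self order_trans by blast
      then show "\<exists>w. ((\<lambda>t. - (z t $ j)) has_real_derivative w) (at t) \<and> w \<le> Lc"
        using DERIV_minus[OF comp_deriv[OF v(1)]] by blast
    qed
    ultimately show ?thesis by simp
  qed
  have norm_bound: "norm (z b - z a) \<le> real CARD('m) * Lc * (b - a)" if ab: "0 \<le> a" "a \<le> b" for a b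
  proof -
    have "norm (z b - z a) \<le> (\<Sum>j\<in>UNIV. \<bar>(z b - z a) $ j\<bar>)" by (rule norm_le_l1_cart)
    also have "\<dots> \<le> (\<Sum>j\<in>(UNIV::'m set). Lc * (b - a))"
      by (rule sum_mono) (use comp_bound[OF ab] in simp)
    also have "\<dots> = real CARD('m) * Lc * (b - a)" by simp
    finally show ?thesis .
  qed
  have acV: "abs_cont_on a b (\<lambda>t. V (z t))" if ab: "0 \<le> a" "a \<le> b" for a b
  proof (rule ac_comp[OF acab[OF ab], of "real (card ?A) + 1"])
    show "real (card ?A) + 1 > 0" by simp
    fix x y :: "real^'m"
    have "norm (V x - V y) \<le> (\<Sum>i\<in>?A. \<bar>\<bar>\<bar>x $ e i\<bar> - d i\<bar> - \<bar>\<bar>y $ e i\<bar> - d i\<bar>\<bar>)"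
      unfolding V_def real_norm_def sum_subtractf[symmetric] by (rule sum_abs)
    also have "\<dots> \<le> (\<Sum>i\<in>?A. norm (x - y))"
    proof (rule sum_mono)
      fix i
      have "\<bar>\<bar>\<bar>x $ e i\<bar> - d i\<bar> - \<bar>\<bar>y $ e i\<bar> - d i\<bar>\<bar> \<le> \<bar>x $ e i - y $ e i\<bar>" by (rule phi_lip)
      also have "\<dots> \<le> norm (x - y)" using component_le_norm_cart[of "x - y" "e i"] by simp
      finally show "\<bar>\<bar>\<bar>x $ e i\<bar> - d i\<bar> - \<bar>\<bar>y $ e i\<bar> - d i\<bar>\<bar> \<le> norm (x - y)" .
    qed
    also have "\<dots> \<le> (real (card ?A) + 1) * norm (x - y)" by (simp add: algebra_simps)
    finally show "norm (V x - V y) \<le> (real (card ?A) + 1) * norm (x - y)" .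
  qed
  have Vmono: "V (z b) \<le> V (z a)" if ab: "0 \<le> a" "a \<le> b" for a b
  proof -
    have "(\<lambda>t. V (z t)) b - (\<lambda>t. V (z t)) a \<le> 0 * (b - a)"
    proof (rule gauge_mono[OF ab(2) negNb acV[OF ab]])
      fix t assume "t \<in> {a..b}" "t \<notin> Nb"
      then show "\<exists>w. ((\<lambda>t. V (z t)) has_real_derivative w) (at t) \<and> w \<le> 0"
        using good[of t] ab by auto
    qed
    then show ?thesis by simp
  qed
  have Vdec: "V (z b) - V (z a) \<le> -(1/2) * (b - a)" if ab: "0 \<le> a" "a \<le> b" and nE: "\<forall>s\<in>{a..b}. z s \<notin> ?E" for a b
  proof -
    have "(\<lambda>t. V (z t)) b - (\<lambda>t. V (z t)) a \<le> -(1/2) * (b - a)"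
    proof (rule gauge_mono[OF ab(2) negNb acV[OF ab]])
      fix t assume t: "t \<in> {a..b}" "t \<notin> Nb"
      then show "\<exists>w. ((\<lambda>t. V (z t)) has_real_derivative w) (at t) \<and> w \<le> -(1/2)"
        using good[of t] ab nE by force
    qed
    then show ?thesis by simp
  qed
  have V0: "\<And>x. V x \<ge> 0" unfolding V_def by (simp add: sum_nonneg)
  show ?thesis
  proof (rule tendstoI)
    fix \<epsilon> :: real assume \<epsilon>: "\<epsilon> > 0"
    show "\<forall>\<^sub>F t in at_top. dist (infdist (z t) ?E) 0 < \<epsilon>"
    proof (rule ccontr)
      assume H: "\<not> (\<forall>\<^sub>F t in at_top. dist (infdist (z t) ?E) 0 < \<epsilon>)"
      have far: "\<exists>t'\<ge>T. infdist (z t') ?E \<ge> \<epsilon>" for T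
      proof (rule ccontr)
        assume "\<not> ?thesis"
        then have nf: "\<forall>t'\<ge>T. infdist (z t') ?E < \<epsilon>" by auto
        have "\<forall>t\<ge>T. dist (infdist (z t) ?E) 0 < \<epsilon>"
        proof (intro allI impI)
          fix t assume "T \<le> t"
          then have "infdist (z t) ?E < \<epsilon>" using nf by blast
          then show "dist (infdist (z t) ?E) 0 < \<epsilon>" using infdist_nonneg[of "z t" ?E] by (simp add: dist_real_def)
        qed
        then show False using H by (auto simp: eventually_at_top_linorder)
      qed
      define K where "K = real CARD('m) * Lc"
      have K0: "K \<ge> 0" using Lc0 by (simp add: K_def)
      define h where "h = \<epsilon> / (2 * (K + 1))"
      have h0: "h > 0" using \<epsilon> K0 by (simp add: h_def)
      have Kh: "K * h < \<epsilon>" 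
      proof -
        have "K * h = \<epsilon> * (K / (2 * (K + 1)))" by (simp add: h_def)
        also have "K / (2 * (K + 1)) < 1" using K0 by (simp add: field_simps)
        then have "\<epsilon> * (K / (2 * (K + 1))) < \<epsilon> * 1" using \<epsilon> by (intro mult_strict_left_mono) auto
        finally show ?thesis by simp
      qed
      have step: "V (z (t + h)) \<le> V (z t) - h/2" if t: "t \<ge> 0" "infdist (z t) ?E \<ge> \<epsilon>" for t
      proof -
        have "\<forall>s\<in>{t..t+h}. z s \<notin> ?E"
        proof
          fix s assume s: "s \<in> {t..t+h}"
          have "norm (z s - z t) \<le> K * (s - t)" using norm_bound[of t s] s t by (simp add: K_def)
          also have "\<dots> \<le> K * h" using s K0 by (intro mult_left_mono) auto
          finally have "dist (z t) (z s) < \<epsilon>" using Kh by (simp add: dist_norm norm_minus_commute)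
          moreover have "infdist (z t) ?E \<le> infdist (z s) ?E + dist (z t) (z s)" by (rule infdist_triangle)
          ultimately have "infdist (z s) ?E > 0" using t by linarith
          then show "z s \<notin> ?E" by auto
        qed
        then have "V (z (t+h)) - V (z t) \<le> -(1/2) * (t + h - t)" using Vdec[of t "t+h"] t h0 by simp
        then show ?thesis by simp
      qed
      have iter: "\<exists>t\<ge>0. V (z t) \<le> V (z 0) - real m * (h/2)" for m :: nat
      proof (induction m)
        case 0 then show ?case by (intro exI[of _ 0]) simp
      next
        case (Suc m)
        then obtain t where t: "t \<ge> 0" "V (z t) \<le> V (z 0) - real m * (h/2)" by blast
        obtain t' where t': "t' \<ge> t" "infdist (z t') ?E \<ge> \<epsilon>" using far by blast
        have "V (z t') \<le> V (z t)" using Vmono t t' by simp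
        moreover have "V (z (t' + h)) \<le> V (z t') - h/2" using step t t' by simp
        moreover have "real (Suc m) * (h/2) = real m * (h/2) + h/2" by (simp add: algebra_simps)
        ultimately have "V (z (t' + h)) \<le> V (z 0) - real (Suc m) * (h/2)" using t by linarith
        moreover have "t' + h \<ge> 0" using t t' h0 by simp
        ultimately show ?case by blast
      qed
      obtain m :: nat where m: "real m > V (z 0) / (h/2)" using reals_Archimedean2 by blast
      then have "real m * (h/2) > V (z 0)" using h0 by (simp add: field_simps)
      moreover obtain t where "t \<ge> 0" "V (z t) \<le> V (z 0) - real m * (h/2)" using iter by blast
      ultimately show False using V0[of "z t"] by linarith
    qed
  qed
qed


end
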